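(* Consider a discounted Markov decision problem with discount factor $\gamma\in(0,1)$ and the inexact policy mirror descent method as described in the context, with $\pi^{(0)}\in\operatorname{rint}\Pi$, and suppose that $\|\widehat Q(\pi^{(k)})-Q(\pi^{(k)})\|_\infty\le\tau$ for all $k\ge0$. Let $\rho\in\Delta(\mathcal{S})$ and $\vartheta_\rho=\frac1{1-\gamma}\|d_\rho(\pi^\star)/\rho\|_\infty$. If the (positive) step sizes satisfy $\eta_0\ge\frac{1-\gamma}{\gamma}D^\star_0$ and $\eta_{k+1}\ge\eta_k/\gamma$ for all $k\ge0$, then for all $k\ge0$, \[ V_\rho(\pi^{(k)})-V_\rho^\star\le\Bigl(1-\frac1{\vartheta_\rho}\Bigr)^k\frac2{1-\gamma}+\frac{4\vartheta_\rho}{1-\gamma}\tau . \]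
   Context: A discounted Markov decision problem (cost-minimization form): finite state set $\mathcal{S}$, finite action set $\mathcal{A}$, transition probabilities $P(s'|s,a)$, cost $R:\mathcal{S}\times\mathcal{A}\to[0,1]$, discount $\gamma$. Policies $\Pi=\Delta(\mathcal{A})^{|\mathcal{S}|}$; $\operatorname{rint}\Pi$ is the set of policies with all entries $\pi_{s,a}>0$. $V_s(\pi)=\mathbf{E}\bigl[\sum_{t\ge0}\gamma^tR(s_t,a_t)\mid s_0=s\bigr]$ with $a_t\sim\pi_{s_t}$, $s_{t+1}\sim P(\cdot|s_t,a_t)$; $V_\rho(\pi)=\sum_s\rho_sV_s(\pi)$; $V_\rho^\star=\min_{\pi\in\Pi}V_\rho(\pi)$; $\pi^\star$ denotes a policy minimizing $V_s$ simultaneously for all $s$. $Q_{s,a}(\pi)=R_{s,a}+\gamma\sum_{s'}P(s'|s,a)V_{s'}(\pi)$. Discounted state visitation: $d_{s,s'}(\pi)=(1-\gamma)\sum_{t\ge0}\gamma^t\Pr^\pi(s_t=s'\mid s_0=s)$, $d_{\rho,s'}(\pi)=\sum_s\rho_sd_{s,s'}(\pi)$. For $p,q\in\Delta(\mathcal{S})$, $\|p/q\|_\infty=\max_sp_s/q_s$ with $0/0=1$. Bregman divergence: $h:\mathbf{R}^{|\mathcal{A}|}\to\mathbf{R}\cup\{+\infty\}$ is a convex function of Legendre type (proper, closed, essentially smooth, strictly convex on the relative interior of its domain) with $\Delta(\mathcal{A})\subseteq\operatorname{dom}h$ and $\operatorname{rint}\Delta(\mathcal{A})\subseteq\operatorname{rint}\operatorname{dom}h$;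 $D(p,p')=h(p)-h(p')-\langle\nabla h(p'),p-p'\rangle$. Inexact policy mirror descent: given estimates $\widehat Q(\pi^{(k)})\in\mathbf{R}^{|\mathcal{S}|\times|\mathcal{A}|}$ of $Q(\pi^{(k)})$, for each $s$, $\pi^{(k+1)}_s=\arg\min_{p\in\Delta(\mathcal{A})}\{\eta_k\langle\widehat Q_s(\pi^{(k)}),p\rangle+D(p,\pi^{(k)}_s)\}$. Notation: $D^\star_k=\sum_sd_{\rho,s}(\pi^\star)D(\pi^\star_s,\pi^{(k)}_s)$. *)

theory Defs
  imports "HOL-Analysis.Analysis"
begin

definition prob_simplex :: "('x::finite \<Rightarrow> real) set" where
  "prob_simplex = {p. (\<forall>x. 0 \<le> p x) \<and> (\<Sum>x\<in>UNIV. p x) = 1}"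

definition policies :: "('s::finite \<Rightarrow> 'a::finite \<Rightarrow> real) set" where
  "policies = {\<pi>. \<forall>s. \<pi> s \<in> prob_simplex}"

definition rint_policies :: "('s::finite \<Rightarrow> 'a::finite \<Rightarrow> real) set" where
  "rint_policies = {\<pi>. \<pi> \<in> policies \<and> (\<forall>s a. 0 < \<pi> s a)}"

text \<open>Pr^pi(s_t = s' | s_0 = s).\<close>
fun state_prob :: "('s::finite \<Rightarrow> 'a::finite \<Rightarrow> 's \<Rightarrow> real) \<Rightarrow> ('s \<Rightarrow> 'a \<Rightarrow> real)
     \<Rightarrow> 's \<Rightarrow> nat \<Rightarrow> 's \<Rightarrow> real" where
  "state_prob P \<pi> s 0 s' = (if s' = s then 1 else 0)"
| "state_prob P \<pi> s (Suc t) s' =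
     (\<Sum>s''\<in>UNIV. state_prob P \<pi> s t s'' * (\<Sum>a\<in>UNIV. \<pi> s'' a * P s'' a s'))"

definition V :: "('s::finite \<Rightarrow> 'a::finite \<Rightarrow> 's \<Rightarrow> real) \<Rightarrow> ('s \<Rightarrow> 'a \<Rightarrow> real) \<Rightarrow> real
     \<Rightarrow> ('s \<Rightarrow> 'a \<Rightarrow> real) \<Rightarrow> 's \<Rightarrow> real" where
  "V P R \<gamma> \<pi> s = (\<Sum>t. \<gamma> ^ t *
      (\<Sum>s'\<in>UNIV. state_prob P \<pi> s t s' * (\<Sum>a\<in>UNIV. \<pi> s' a * R s' a)))"

definition V_rho :: "('s::finite \<Rightarrow> 'a::finite \<Rightarrow> 's \<Rightarrow> real) \<Rightarrow> ('s \<Rightarrow> 'a \<Rightarrow> real) \<Rightarrow> real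
     \<Rightarrow> ('s \<Rightarrow> real) \<Rightarrow> ('s \<Rightarrow> 'a \<Rightarrow> real) \<Rightarrow> real" where
  "V_rho P R \<gamma> \<rho> \<pi> = (\<Sum>s\<in>UNIV. \<rho> s * V P R \<gamma> \<pi> s)"

definition V_rho_star :: "('s::finite \<Rightarrow> 'a::finite \<Rightarrow> 's \<Rightarrow> real) \<Rightarrow> ('s \<Rightarrow> 'a \<Rightarrow> real) \<Rightarrow> real
     \<Rightarrow> ('s \<Rightarrow> real) \<Rightarrow> real" where
  "V_rho_star P R \<gamma> \<rho> = Inf (V_rho P R \<gamma> \<rho> ` policies)"

definition Q :: "('s::finite \<Rightarrow> 'a::finite \<Rightarrow> 's \<Rightarrow> real) \<Rightarrow> ('s \<Rightarrow> 'a \<Rightarrow> real) \<Rightarrow> real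
     \<Rightarrow> ('s \<Rightarrow> 'a \<Rightarrow> real) \<Rightarrow> 's \<Rightarrow> 'a \<Rightarrow> real" where
  "Q P R \<gamma> \<pi> s a = R s a + \<gamma> * (\<Sum>s'\<in>UNIV. P s a s' * V P R \<gamma> \<pi> s')"

definition visit :: "('s::finite \<Rightarrow> 'a::finite \<Rightarrow> 's \<Rightarrow> real) \<Rightarrow> real
     \<Rightarrow> ('s \<Rightarrow> 'a \<Rightarrow> real) \<Rightarrow> 's \<Rightarrow> 's \<Rightarrow> real" where
  "visit P \<gamma> \<pi> s s' = (1 - \<gamma>) * (\<Sum>t. \<gamma> ^ t * state_prob P \<pi> s t s')"

definition visit_rho :: "('s::finite \<Rightarrow> 'a::finite \<Rightarrow> 's \<Rightarrow> real) \<Rightarrow> real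
     \<Rightarrow> ('s \<Rightarrow> real) \<Rightarrow> ('s \<Rightarrow> 'a \<Rightarrow> real) \<Rightarrow> 's \<Rightarrow> real" where
  "visit_rho P \<gamma> \<rho> \<pi> s' = (\<Sum>s\<in>UNIV. \<rho> s * visit P \<gamma> \<pi> s s')"

text \<open>||p/q||_infty = max_s p_s/q_s with 0/0 = 1 (and c/0 = +infinity for c > 0).\<close>
definition ratio_norm :: "('s::finite \<Rightarrow> real) \<Rightarrow> ('s \<Rightarrow> real) \<Rightarrow> ereal" where
  "ratio_norm p q = Max (range (\<lambda>s. if q s = 0 then (if p s = 0 then 1 else \<infinity>)
                                    else ereal (p s / q s)))"

definition edom :: "('x::euclidean_space \<Rightarrow> ereal) \<Rightarrow> 'x set" where
  "edom h = {x. h x < \<infinity>}"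

definition grad :: "('x::euclidean_space \<Rightarrow> ereal) \<Rightarrow> 'x \<Rightarrow> 'x" where
  "grad h x = (SOME g. GDERIV (\<lambda>y. real_of_ereal (h y)) x :> g)"

definition strictly_convex_on :: "'x::real_vector set \<Rightarrow> ('x \<Rightarrow> real) \<Rightarrow> bool" where
  "strictly_convex_on S f \<longleftrightarrow> (\<forall>x\<in>S. \<forall>y\<in>S. \<forall>u::real. x \<noteq> y \<and> 0 < u \<and> u < 1 \<longrightarrow>
      f ((1 - u) *\<^sub>R x + u *\<^sub>R y) < (1 - u) * f x + u * f y)"

text \<open>Convex function of Legendre type (Rockafellar, Sect. 26): proper, closed, convex,
  essentially smooth and strictly convex on the (relative) interior of its domain.\<close>
definition legendre :: "('x::euclidean_space \<Rightarrow> ereal) \<Rightarrow> bool" where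
  "legendre h \<longleftrightarrow>
     \<comment> \<open>proper\<close>
     (\<forall>x. h x \<noteq> -\<infinity>) \<and> edom h \<noteq> {} \<and>
     \<comment> \<open>closed (closed epigraph)\<close>
     closed {(x, t::real). h x \<le> ereal t} \<and>
     \<comment> \<open>convex\<close>
     convex (edom h) \<and> convex_on (edom h) (\<lambda>x. real_of_ereal (h x)) \<and>
     \<comment> \<open>essentially smooth\<close>
     interior (edom h) \<noteq> {} \<and>
     (\<forall>x\<in>interior (edom h). (\<lambda>y. real_of_ereal (h y)) differentiable (at x)) \<and>
     (\<forall>X x. (\<forall>n. X n \<in> interior (edom h)) \<longrightarrow> X \<longlonglongrightarrow> x \<longrightarrow> x \<notin> interior (edom h) \<longrightarrow>
        filterlim (\<lambda>n. norm (grad h (X n))) at_top sequentially) \<and>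
     \<comment> \<open>strictly convex on the relative interior of the domain\<close>
     strictly_convex_on (rel_interior (edom h)) (\<lambda>x. real_of_ereal (h x))"

definition vec_of :: "('a::finite \<Rightarrow> real) \<Rightarrow> real ^ 'a" where
  "vec_of p = (\<chi> a. p a)"

definition bregman :: "(real ^ 'a::finite \<Rightarrow> ereal) \<Rightarrow> ('a \<Rightarrow> real) \<Rightarrow> ('a \<Rightarrow> real) \<Rightarrow> real" where
  "bregman h p p' = real_of_ereal (h (vec_of p)) - real_of_ereal (h (vec_of p'))
                    - inner (grad h (vec_of p')) (vec_of p - vec_of p')"

end

theory Submission
  imports Defs
begin

lemma simplex_nonneg: "p \<in> prob_simplex \<Longrightarrow> 0 \<le> p x"
  by (simp add: prob_simplex_def)

lemma simplex_sum: "p \<in> prob_simplex \<Longrightarrow> (\<Sum>x\<in>UNIV. p x) = 1"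
  by (simp add: prob_simplex_def)

lemma simplex_le1: "p \<in> prob_simplex \<Longrightarrow> p x \<le> 1"
proof -
  assume p: "p \<in> prob_simplex"
  have "p x \<le> (\<Sum>y\<in>UNIV. p y)"
    by (rule member_le_sum) (auto simp: simplex_nonneg[OF p])
  thus ?thesis using simplex_sum[OF p] by simp
qed

lemma simplex_avg_le:
  assumes p: "p \<in> prob_simplex" and b: "\<And>x. f x \<le> c"
  shows "(\<Sum>x\<in>UNIV. p x * f x) \<le> c"
proof -
  have "(\<Sum>x\<in>UNIV. p x * f x) \<le> (\<Sum>x\<in>UNIV. p x * c)"
    by (rule sum_mono) (simp add: mult_left_mono b simplex_nonneg[OF p])
  also have "\<dots> = c" using simplex_sum[OF p] by (simp add: sum_distrib_right[symmetric])
  finally show ?thesis .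
qed

lemma simplex_avg_ge:
  assumes p: "p \<in> prob_simplex" and b: "\<And>x. c \<le> f x"
  shows "c \<le> (\<Sum>x\<in>UNIV. p x * f x)"
proof -
  have "(\<Sum>x\<in>UNIV. p x * c) \<le> (\<Sum>x\<in>UNIV. p x * f x)"
    by (rule sum_mono) (simp add: mult_left_mono b simplex_nonneg[OF p])
  moreover have "(\<Sum>x\<in>UNIV. p x * c) = c" using simplex_sum[OF p] by (simp add: sum_distrib_right[symmetric])
  ultimately show ?thesis by simp
qed

lemma policies_simplex: "\<pi> \<in> policies \<Longrightarrow> \<pi> s \<in> prob_simplex"
  by (simp add: policies_def)

locale mdp =
  fixes P :: "'s::finite \<Rightarrow> 'a::finite \<Rightarrow> 's \<Rightarrow> real"
    and R :: "'s \<Rightarrow> 'a \<Rightarrow> real"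
    and \<gamma> :: real
  assumes P_stoch: "\<And>s a. P s a \<in> prob_simplex"
    and R_range: "\<And>s a. 0 \<le> R s a \<and> R s a \<le> 1"
    and gamma: "0 < \<gamma>" "\<gamma> < 1"
begin

definition K :: "('s \<Rightarrow> 'a \<Rightarrow> real) \<Rightarrow> 's \<Rightarrow> 's \<Rightarrow> real" where
  "K \<pi> x y = (\<Sum>a\<in>UNIV. \<pi> x a * P x a y)"

definition rr :: "('s \<Rightarrow> 'a \<Rightarrow> real) \<Rightarrow> 's \<Rightarrow> real" where
  "rr \<pi> x = (\<Sum>a\<in>UNIV. \<pi> x a * R x a)"

lemma K_simplex: "\<pi> \<in> policies \<Longrightarrow> K \<pi> x \<in> prob_simplex"
proof -
  assume pi: "\<pi> \<in> policies"
  have nn: "0 \<le> K \<pi> x y" for y unfolding K_def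
    by (intro sum_nonneg mult_nonneg_nonneg simplex_nonneg[OF policies_simplex[OF pi]] simplex_nonneg[OF P_stoch])
  have "(\<Sum>y\<in>UNIV. K \<pi> x y) = (\<Sum>a\<in>UNIV. \<pi> x a * (\<Sum>y\<in>UNIV. P x a y))"
    unfolding K_def sum_distrib_left by (rule sum.swap)
  also have "\<dots> = 1" using simplex_sum[OF P_stoch] simplex_sum[OF policies_simplex[OF pi]] by simp
  finally show ?thesis using nn by (simp add: prob_simplex_def)
qed

lemma rr_bounds: "\<pi> \<in> policies \<Longrightarrow> 0 \<le> rr \<pi> x \<and> rr \<pi> x \<le> 1"
  unfolding rr_def using R_range
  by (auto intro!: simplex_avg_le simplex_avg_ge policies_simplex)

lemma sp_Suc: "state_prob P \<pi> s (Suc t) y = (\<Sum>z\<in>UNIV. state_prob P \<pi> s t z * K \<pi> z y)"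
  by (simp add: K_def)

declare state_prob.simps(2)[simp del]

lemma delta_mult: "(if z = s then 1 else 0) * (x::real) = (if z = s then x else 0)" by simp

lemma sp_simplex: "\<pi> \<in> policies \<Longrightarrow> (\<lambda>y. state_prob P \<pi> s t y) \<in> prob_simplex"
proof (induction t)
  case 0
  then show ?case by (auto simp: prob_simplex_def)
next
  case (Suc t)
  have nn: "0 \<le> state_prob P \<pi> s (Suc t) y" for y unfolding sp_Suc
    using Suc by (intro sum_nonneg mult_nonneg_nonneg simplex_nonneg[OF K_simplex]) (auto intro: simplex_nonneg)
  have "(\<Sum>y\<in>UNIV. state_prob P \<pi> s (Suc t) y) = (\<Sum>z\<in>UNIV. state_prob P \<pi> s t z * (\<Sum>y\<in>UNIV. K \<pi> z y))"
    unfolding sp_Suc sum_distrib_left mult.assoc by (rule sum.swap)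
  also have "\<dots> = 1" using simplex_sum[OF K_simplex[OF Suc.prems]] simplex_sum[OF Suc.IH[OF Suc.prems]] by simp
  finally show ?case using nn by (simp add: prob_simplex_def)
qed

lemma sp_back: "state_prob P \<pi> s (Suc t) y = (\<Sum>z\<in>UNIV. K \<pi> s z * state_prob P \<pi> z t y)"
proof (induction t arbitrary: s y)
  case 0
  then show ?case by (simp add: sp_Suc delta_mult mult.commute[of "K \<pi> s _"])
next
  case (Suc t)
  have "state_prob P \<pi> s (Suc (Suc t)) y = (\<Sum>z\<in>UNIV. (\<Sum>w\<in>UNIV. K \<pi> s w * state_prob P \<pi> w t z) * K \<pi> z y)"
    by (subst sp_Suc) (simp add: Suc.IH)
  also have "\<dots> = (\<Sum>w\<in>UNIV. K \<pi> s w * (\<Sum>z\<in>UNIV. state_prob P \<pi> w t z * K \<pi> z y))"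
    unfolding sum_distrib_left sum_distrib_right mult.assoc by (rule sum.swap)
  also have "\<dots> = (\<Sum>w\<in>UNIV. K \<pi> s w * state_prob P \<pi> w (Suc t) y)"
    by (simp add: sp_Suc)
  finally show ?case .
qed

definition E :: "('s \<Rightarrow> 'a \<Rightarrow> real) \<Rightarrow> 's \<Rightarrow> nat \<Rightarrow> ('s \<Rightarrow> real) \<Rightarrow> real" where
  "E \<pi> s t f = (\<Sum>y\<in>UNIV. state_prob P \<pi> s t y * f y)"

lemma E_bounds: "\<pi> \<in> policies \<Longrightarrow> (\<And>y. a \<le> f y \<and> f y \<le> b) \<Longrightarrow> a \<le> E \<pi> s t f \<and> E \<pi> s t f \<le> b"
  unfolding E_def using sp_simplex
  by (metis simplex_avg_ge simplex_avg_le)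

lemma V_eq: "V P R \<gamma> \<pi> s = (\<Sum>t. \<gamma> ^ t * E \<pi> s t (rr \<pi>))"
  by (simp add: V_def E_def rr_def)

lemma geom_summable_bounded:
  assumes "\<And>t. \<bar>g t\<bar> \<le> B"
  shows "summable (\<lambda>t. \<gamma> ^ t * g t)"
proof (rule summable_comparison_test'[where g="\<lambda>t. B * \<gamma> ^ t"])
  show "summable (\<lambda>t. B * \<gamma> ^ t)" using gamma by (intro summable_mult summable_geometric) auto
  fix t
  have "norm (\<gamma> ^ t * g t) = \<gamma> ^ t * \<bar>g t\<bar>" using gamma by (simp add: abs_mult)
  also have "\<dots> \<le> \<gamma> ^ t * B" using gamma assms by (intro mult_left_mono) auto
  finally show "norm (\<gamma> ^ t * g t) \<le> B * \<gamma> ^ t" by (simp add: mult.commute)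
qed

lemma E_summable:
  assumes "\<pi> \<in> policies" "\<And>y. \<bar>f y\<bar> \<le> B"
  shows "summable (\<lambda>t. \<gamma> ^ t * E \<pi> s t f)"
proof (rule geom_summable_bounded)
  fix t
  have "- B \<le> E \<pi> s t f \<and> E \<pi> s t f \<le> B"
    using assms by (intro E_bounds) (simp_all add: abs_le_iff, smt (verit))
  thus "\<bar>E \<pi> s t f\<bar> \<le> B" by auto
qed

lemma geom_sum_bounds:
  assumes "\<And>t. a \<le> g t \<and> g t \<le> b" "0 \<le> a"
  shows "a / (1 - \<gamma>) \<le> (\<Sum>t. \<gamma> ^ t * g t) \<and> (\<Sum>t. \<gamma> ^ t * g t) \<le> b / (1 - \<gamma>)"
proof -
  have b0: "0 \<le> b" using assms(1)[of 0] assms(2) by linarith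
  have sg: "summable (\<lambda>t. \<gamma> ^ t * g t)"
    using assms b0 by (intro geom_summable_bounded[where B=b]) (smt (verit))
  have geo: "(\<lambda>t. c * \<gamma> ^ t) sums (c / (1 - \<gamma>))" for c
    using sums_mult[OF geometric_sums[of \<gamma>], of c] gamma by (simp add: divide_simps)
  have "(\<Sum>t. \<gamma> ^ t * g t) \<le> (\<Sum>t. b * \<gamma> ^ t)"
    using assms gamma sg geo by (intro suminf_le) (auto simp: sums_iff mult.commute intro: mult_left_mono)
  moreover have "(\<Sum>t. a * \<gamma> ^ t) \<le> (\<Sum>t. \<gamma> ^ t * g t)"
    using assms gamma sg geo by (intro suminf_le) (auto simp: sums_iff mult.commute intro: mult_left_mono)
  ultimately show ?thesis using geo by (simp add: sums_iff)
qed

lemma V_bounds: "\<pi> \<in> policies \<Longrightarrow> 0 \<le> V P R \<gamma> \<pi> s \<and> V P R \<gamma> \<pi> s \<le> 1 / (1 - \<gamma>)"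
  unfolding V_eq using geom_sum_bounds[where g="\<lambda>t. E \<pi> s t (rr \<pi>)" and a=0 and b=1]
  using E_bounds[of \<pi> 0 "rr \<pi>" 1] rr_bounds by auto

end

context mdp begin

lemma E_Suc_back: "E \<pi> s (Suc t) f = (\<Sum>z\<in>UNIV. K \<pi> s z * E \<pi> z t f)"
  unfolding E_def sp_back sum_distrib_right sum_distrib_left mult.assoc by (rule sum.swap)

lemma E_Suc_fwd: "E \<pi> s (Suc t) f = E \<pi> s t (\<lambda>y. \<Sum>z\<in>UNIV. K \<pi> y z * f z)"
  unfolding E_def sp_Suc sum_distrib_right sum_distrib_left mult.assoc by (rule sum.swap)

lemma E_0: "E \<pi> s 0 f = f s"
  by (simp add: E_def delta_mult)

lemma E_diff: "E \<pi> s t (\<lambda>y. f y - g y) = E \<pi> s t f - E \<pi> s t g"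
  by (simp add: E_def algebra_simps sum_subtractf)

lemma E_add: "E \<pi> s t (\<lambda>y. f y + g y) = E \<pi> s t f + E \<pi> s t g"
  by (simp add: E_def algebra_simps sum.distrib)

lemma E_cmult: "E \<pi> s t (\<lambda>y. c * f y) = c * E \<pi> s t f"
  by (simp add: E_def algebra_simps sum_distrib_left)

lemma V_summable: "\<pi> \<in> policies \<Longrightarrow> summable (\<lambda>t. \<gamma> ^ t * E \<pi> s t (rr \<pi>))"
  using rr_bounds by (intro E_summable[where B=1]) auto

lemma V_bellman0: 
  assumes pi: "\<pi> \<in> policies"
  shows "V P R \<gamma> \<pi> s = rr \<pi> s + \<gamma> * (\<Sum>z\<in>UNIV. K \<pi> s z * V P R \<gamma> \<pi> z)"
proof -
  let ?g = "\<lambda>s t. \<gamma> ^ t * E \<pi> s t (rr \<pi>)"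
  have "V P R \<gamma> \<pi> s = (\<Sum>t. ?g s (Suc t)) + ?g s 0"
    unfolding V_eq using suminf_split_head[OF V_summable[OF pi]] by simp
  also have "(\<Sum>t. ?g s (Suc t)) = (\<Sum>t. \<gamma> * (\<Sum>z\<in>UNIV. K \<pi> s z * ?g z t))"
    by (simp add: E_Suc_back sum_distrib_left algebra_simps)
  also have "\<dots> = \<gamma> * (\<Sum>t. (\<Sum>z\<in>UNIV. K \<pi> s z * ?g z t))"
    by (rule suminf_mult) (intro summable_sum summable_mult V_summable[OF pi])
  also have "(\<Sum>t. (\<Sum>z\<in>UNIV. K \<pi> s z * ?g z t)) = (\<Sum>z\<in>UNIV. K \<pi> s z * (\<Sum>t. ?g z t))"
    by (subst suminf_sum) (auto intro!: summable_mult V_summable[OF pi] suminf_mult sum.cong)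
  finally show ?thesis by (simp add: V_eq E_0)
qed

lemma Q_avg: "(\<Sum>a\<in>UNIV. \<pi>' y a * Q P R \<gamma> \<pi> y a) = rr \<pi>' y + \<gamma> * (\<Sum>z\<in>UNIV. K \<pi>' y z * V P R \<gamma> \<pi> z)"
proof -
  have "(\<Sum>z\<in>UNIV. K \<pi>' y z * V P R \<gamma> \<pi> z) = (\<Sum>a\<in>UNIV. \<pi>' y a * (\<Sum>z\<in>UNIV. P y a z * V P R \<gamma> \<pi> z))"
    unfolding K_def sum_distrib_left sum_distrib_right mult.assoc by (rule sum.swap)
  then show ?thesis
    unfolding Q_def rr_def by (simp add: distrib_left sum.distrib sum_distrib_left mult.left_commute)
qed

lemma V_bellman: "\<pi> \<in> policies \<Longrightarrow> V P R \<gamma> \<pi> s = (\<Sum>a\<in>UNIV. \<pi> s a * Q P R \<gamma> \<pi> s a)"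
  using V_bellman0 Q_avg by simp

end

context mdp begin

lemma sp_nonneg: "\<pi> \<in> policies \<Longrightarrow> 0 \<le> state_prob P \<pi> s t y"
  using sp_simplex simplex_nonneg by blast

lemma sp_le1: "\<pi> \<in> policies \<Longrightarrow> state_prob P \<pi> s t y \<le> 1"
  using sp_simplex simplex_le1 by blast

lemma sp_summable: "\<pi> \<in> policies \<Longrightarrow> summable (\<lambda>t. \<gamma> ^ t * state_prob P \<pi> s t y)"
  by (rule geom_summable_bounded[where B=1]) (simp add: sp_nonneg sp_le1)

lemma visit_nonneg: "\<pi> \<in> policies \<Longrightarrow> 0 \<le> visit P \<gamma> \<pi> s y"
  unfolding visit_def using gamma sp_nonneg
  by (intro mult_nonneg_nonneg suminf_nonneg sp_summable) auto

lemma visit_ge: "\<pi> \<in> policies \<Longrightarrow> (1 - \<gamma>) * (if y = s then 1 else 0) \<le> visit P \<gamma> \<pi> s y"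
proof -
  assume pi: "\<pi> \<in> policies"
  have "(\<Sum>t\<in>{0}. \<gamma> ^ t * state_prob P \<pi> s t y) \<le> (\<Sum>t. \<gamma> ^ t * state_prob P \<pi> s t y)"
    using gamma by (intro sum_le_suminf sp_summable pi) (auto intro!: mult_nonneg_nonneg sp_nonneg pi)
  then show ?thesis unfolding visit_def using gamma by (intro mult_left_mono) auto
qed

lemma E_visit:
  assumes pi: "\<pi> \<in> policies" and b: "\<And>y. \<bar>f y\<bar> \<le> B"
  shows "(\<Sum>t. \<gamma> ^ t * E \<pi> s t f) = (\<Sum>y\<in>UNIV. visit P \<gamma> \<pi> s y * f y) / (1 - \<gamma>)"
proof -
  have "(\<Sum>t. \<gamma> ^ t * E \<pi> s t f) = (\<Sum>t. \<Sum>y\<in>UNIV. (\<gamma> ^ t * state_prob P \<pi> s t y) * f y)"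
    by (simp add: E_def sum_distrib_left mult.assoc)
  also have "\<dots> = (\<Sum>y\<in>UNIV. \<Sum>t. (\<gamma> ^ t * state_prob P \<pi> s t y) * f y)"
    by (rule suminf_sum) (intro summable_mult2 sp_summable pi)
  also have "\<dots> = (\<Sum>y\<in>UNIV. (\<Sum>t. \<gamma> ^ t * state_prob P \<pi> s t y) * f y)"
    by (intro sum.cong refl suminf_mult2[symmetric] sp_summable pi)
  also have "\<dots> = (\<Sum>y\<in>UNIV. visit P \<gamma> \<pi> s y * f y) / (1 - \<gamma>)"
    using gamma by (simp add: visit_def sum_divide_distrib)
  finally show ?thesis .
qed

lemma visit_sum: "\<pi> \<in> policies \<Longrightarrow> (\<Sum>y\<in>UNIV. visit P \<gamma> \<pi> s y) = 1"
proof -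
  assume pi: "\<pi> \<in> policies"
  have "(\<Sum>t. \<gamma> ^ t * E \<pi> s t (\<lambda>_. 1)) = (\<Sum>y\<in>UNIV. visit P \<gamma> \<pi> s y * 1) / (1 - \<gamma>)"
    by (rule E_visit[OF pi, where B=1]) simp
  moreover have "E \<pi> s t (\<lambda>_. 1) = 1" for t
    using simplex_sum[OF sp_simplex[OF pi]] by (simp add: E_def)
  moreover have "(\<Sum>t. \<gamma> ^ t) = 1 / (1 - \<gamma>)" using gamma by (simp add: suminf_geometric)
  ultimately show ?thesis using gamma by simp
qed

lemma visit_simplex: "\<pi> \<in> policies \<Longrightarrow> visit P \<gamma> \<pi> s \<in> prob_simplex"
  using visit_sum visit_nonneg by (simp add: prob_simplex_def)

lemma visit_rho_simplex: "\<pi> \<in> policies \<Longrightarrow> \<rho> \<in> prob_simplex \<Longrightarrow> visit_rho P \<gamma> \<rho> \<pi> \<in> prob_simplex"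
proof -
  assume pi: "\<pi> \<in> policies" and rho: "\<rho> \<in> prob_simplex"
  have "(\<Sum>y\<in>UNIV. visit_rho P \<gamma> \<rho> \<pi> y) = (\<Sum>s\<in>UNIV. \<rho> s * (\<Sum>y\<in>UNIV. visit P \<gamma> \<pi> s y))"
    unfolding visit_rho_def sum_distrib_left by (rule sum.swap)
  also have "\<dots> = 1" using visit_sum[OF pi] simplex_sum[OF rho] by simp
  moreover have "0 \<le> visit_rho P \<gamma> \<rho> \<pi> y" for y unfolding visit_rho_def
    using pi rho by (intro sum_nonneg mult_nonneg_nonneg visit_nonneg simplex_nonneg[OF rho]) auto
  ultimately show ?thesis unfolding prob_simplex_def by (simp add: visit_rho_def)
qed

lemma visit_rho_ge: "\<pi> \<in> policies \<Longrightarrow> \<rho> \<in> prob_simplex \<Longrightarrow> (1 - \<gamma>) * \<rho> y \<le> visit_rho P \<gamma> \<rho> \<pi> y"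
proof -
  assume pi: "\<pi> \<in> policies" and rho: "\<rho> \<in> prob_simplex"
  have "(1 - \<gamma>) * \<rho> y = (\<Sum>s\<in>UNIV. \<rho> s * ((1 - \<gamma>) * (if y = s then 1 else 0)))"
    by (simp add: delta_mult if_distrib cong: if_cong)
  also have "\<dots> \<le> visit_rho P \<gamma> \<rho> \<pi> y" unfolding visit_rho_def
    by (intro sum_mono mult_left_mono visit_ge pi simplex_nonneg[OF rho])
  finally show ?thesis .
qed

end

context mdp begin

lemma KV_bound: "\<pi> \<in> policies \<Longrightarrow> \<pi>' \<in> policies \<Longrightarrow>
   0 \<le> (\<Sum>z\<in>UNIV. K \<pi>' y z * V P R \<gamma> \<pi> z) \<and> (\<Sum>z\<in>UNIV. K \<pi>' y z * V P R \<gamma> \<pi> z) \<le> 1 / (1 - \<gamma>)"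
  using V_bounds by (metis K_simplex simplex_avg_ge simplex_avg_le)

lemma pdl_state:
  assumes pi: "\<pi> \<in> policies" and pi': "\<pi>' \<in> policies"
  shows "V P R \<gamma> \<pi>' s - V P R \<gamma> \<pi> s =
    (\<Sum>y\<in>UNIV. visit P \<gamma> \<pi>' s y * (\<Sum>a\<in>UNIV. (\<pi>' y a - \<pi> y a) * Q P R \<gamma> \<pi> y a)) / (1 - \<gamma>)"
proof -
  define A where "A y = (\<Sum>a\<in>UNIV. \<pi>' y a * Q P R \<gamma> \<pi> y a)" for y
  define W where "W t = \<gamma> ^ t * E \<pi>' s t (V P R \<gamma> \<pi>)" for t
  have Vb: "\<bar>V P R \<gamma> \<pi> y\<bar> \<le> 1 / (1 - \<gamma>)" for y using V_bounds[OF pi] by auto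
  have Ab: "\<bar>A y - V P R \<gamma> \<pi> y\<bar> \<le> 1 + 2 / (1 - \<gamma>)" for y
  proof -
    have "\<bar>A y\<bar> \<le> 1 + 1 / (1 - \<gamma>)"
    proof -
      let ?X = "(\<Sum>z\<in>UNIV. K \<pi>' y z * V P R \<gamma> \<pi> z)"
      have x: "0 \<le> ?X" "?X \<le> 1 / (1 - \<gamma>)" using KV_bound[OF pi pi', of y] by auto
      have "\<gamma> * ?X \<le> ?X" using x gamma by (intro mult_left_le_one_le) auto
      moreover have "0 \<le> \<gamma> * ?X" using x gamma by simp
      ultimately show ?thesis
        unfolding A_def Q_avg using rr_bounds[OF pi', of y] x by linarith
    qed
    thus ?thesis using Vb[of y] by simp
  qed
  have key: "\<gamma> ^ t * E \<pi>' s t (\<lambda>y. A y - V P R \<gamma> \<pi> y) = \<gamma> ^ t * E \<pi>' s t (rr \<pi>') + (W (Suc t) - W t)" for t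
  proof -
    have "E \<pi>' s t A = E \<pi>' s t (rr \<pi>') + \<gamma> * E \<pi>' s (Suc t) (V P R \<gamma> \<pi>)"
      unfolding A_def Q_avg E_add E_cmult E_Suc_fwd ..
    then show ?thesis unfolding E_diff W_def by (simp add: algebra_simps)
  qed
  have s1: "(\<lambda>t. \<gamma> ^ t * E \<pi>' s t (rr \<pi>')) sums V P R \<gamma> \<pi>' s"
    unfolding V_eq using V_summable[OF pi'] by (simp add: summable_sums)
  have "W \<longlonglongrightarrow> 0" unfolding W_def
    by (rule summable_LIMSEQ_zero) (rule E_summable[OF pi' Vb])
  hence s2: "(\<lambda>t. W (Suc t) - W t) sums (0 - W 0)" by (rule telescope_sums)
  have "(\<lambda>t. \<gamma> ^ t * E \<pi>' s t (\<lambda>y. A y - V P R \<gamma> \<pi> y)) sums (V P R \<gamma> \<pi>' s + (0 - W 0))"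
    unfolding key by (rule sums_add[OF s1 s2])
  hence "V P R \<gamma> \<pi>' s - V P R \<gamma> \<pi> s = (\<Sum>t. \<gamma> ^ t * E \<pi>' s t (\<lambda>y. A y - V P R \<gamma> \<pi> y))"
    by (simp add: sums_iff W_def E_0)
  also have "\<dots> = (\<Sum>y\<in>UNIV. visit P \<gamma> \<pi>' s y * (A y - V P R \<gamma> \<pi> y)) / (1 - \<gamma>)"
    by (rule E_visit[OF pi' Ab])
  also have "\<dots> = (\<Sum>y\<in>UNIV. visit P \<gamma> \<pi>' s y * (\<Sum>a\<in>UNIV. (\<pi>' y a - \<pi> y a) * Q P R \<gamma> \<pi> y a)) / (1 - \<gamma>)"
    unfolding A_def V_bellman[OF pi] by (simp add: left_diff_distrib sum_subtractf)
  finally show ?thesis .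
qed

lemma pdl:
  assumes pi: "\<pi> \<in> policies" and pi': "\<pi>' \<in> policies"
  shows "V_rho P R \<gamma> \<rho> \<pi>' - V_rho P R \<gamma> \<rho> \<pi> =
    (\<Sum>y\<in>UNIV. visit_rho P \<gamma> \<rho> \<pi>' y * (\<Sum>a\<in>UNIV. (\<pi>' y a - \<pi> y a) * Q P R \<gamma> \<pi> y a)) / (1 - \<gamma>)"
proof -
  have "V_rho P R \<gamma> \<rho> \<pi>' - V_rho P R \<gamma> \<rho> \<pi> = (\<Sum>s\<in>UNIV. \<rho> s * (V P R \<gamma> \<pi>' s - V P R \<gamma> \<pi> s))"
    by (simp add: V_rho_def algebra_simps sum_subtractf)
  also have "\<dots> = (\<Sum>s\<in>UNIV. \<Sum>y\<in>UNIV. \<rho> s * visit P \<gamma> \<pi>' s y * (\<Sum>a\<in>UNIV. (\<pi>' y a - \<pi> y a) * Q P R \<gamma> \<pi> y a)) / (1 - \<gamma>)"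
    unfolding pdl_state[OF pi pi'] by (simp add: sum_divide_distrib sum_distrib_left mult.assoc)
  also have "\<dots> = (\<Sum>y\<in>UNIV. \<Sum>s\<in>UNIV. \<rho> s * visit P \<gamma> \<pi>' s y * (\<Sum>a\<in>UNIV. (\<pi>' y a - \<pi> y a) * Q P R \<gamma> \<pi> y a)) / (1 - \<gamma>)"
    by (subst sum.swap) (rule refl)
  also have "\<dots> = (\<Sum>y\<in>UNIV. visit_rho P \<gamma> \<rho> \<pi>' y * (\<Sum>a\<in>UNIV. (\<pi>' y a - \<pi> y a) * Q P R \<gamma> \<pi> y a)) / (1 - \<gamma>)"
    unfolding visit_rho_def by (simp add: sum_distrib_right)
  finally show ?thesis .
qed

end

lemma linear_gradient_rep:
  fixes D :: "'x::euclidean_space \<Rightarrow> real"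
  assumes "linear D"
  shows "D = (\<lambda>v. v \<bullet> (\<Sum>b\<in>Basis. D b *\<^sub>R b))"
proof
  fix v :: 'x
  have "D v = D (\<Sum>b\<in>Basis. (v \<bullet> b) *\<^sub>R b)" by (simp add: euclidean_representation)
  also have "\<dots> = (\<Sum>b\<in>Basis. (v \<bullet> b) * D b)"
    using assms by (simp add: linear_sum linear_scale)
  also have "\<dots> = v \<bullet> (\<Sum>b\<in>Basis. D b *\<^sub>R b)"
    by (simp add: inner_sum_right mult.commute)
  finally show "D v = v \<bullet> (\<Sum>b\<in>Basis. D b *\<^sub>R b)" .
qed

lemma gderiv_unique:
  "GDERIV f x :> g \<Longrightarrow> GDERIV f x :> g' \<Longrightarrow> g = g'"
proof -
  assume a: "GDERIV f x :> g" "GDERIV f x :> g'"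
  have "(\<lambda>h. h \<bullet> g) = (\<lambda>h. h \<bullet> g')"
    using a unfolding gderiv_def by (rule has_derivative_unique)
  hence "(g - g') \<bullet> g = (g - g') \<bullet> g'" by meson
  hence "(g - g') \<bullet> (g - g') = 0" by (simp add: inner_diff_right)
  thus ?thesis by simp
qed

lemma differentiable_gderiv:
  fixes f :: "'x::euclidean_space \<Rightarrow> real"
  assumes "f differentiable (at x)"
  shows "\<exists>g. GDERIV f x :> g"
proof -
  obtain D where D: "(f has_derivative D) (at x)" using assms by (auto simp: differentiable_def)
  hence "linear D" using has_derivative_linear by blast
  hence "D = (\<lambda>v. v \<bullet> (\<Sum>b\<in>Basis. D b *\<^sub>R b))" by (rule linear_gradient_rep)
  thus ?thesis using D unfolding gderiv_def by metis
qed

lemma grad_eq: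
  assumes "(\<lambda>y. real_of_ereal (h y)) differentiable (at x)"
  shows "GDERIV (\<lambda>y. real_of_ereal (h y)) x :> grad h x"
  unfolding grad_def using differentiable_gderiv[OF assms] by (rule someI_ex)

lemma dir_deriv_tendsto:
  fixes f :: "'x::real_normed_vector \<Rightarrow> real"
  assumes "(f has_derivative D) (at x)"
  shows "((\<lambda>t. (f (x + t *\<^sub>R v) - f x) / t) \<longlongrightarrow> D v) (at_right 0)"
proof -
  have l: "((\<lambda>t::real. x + t *\<^sub>R v) has_derivative (\<lambda>t. t *\<^sub>R v)) (at 0)"
    by (auto intro!: derivative_eq_intros)
  have "((\<lambda>t. f (x + t *\<^sub>R v)) has_derivative (\<lambda>t. D (t *\<^sub>R v))) (at 0)"
    using has_derivative_compose[OF l, of f D] assms by simp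
  moreover have "(\<lambda>t. D (t *\<^sub>R v)) = (\<lambda>t. t * D v)"
    using has_derivative_linear[OF assms] by (simp add: linear_scale)
  ultimately have "((\<lambda>t. f (x + t *\<^sub>R v)) has_real_derivative D v) (at 0)"
    unfolding has_field_derivative_def by (simp add: mult.commute[of _ "D v"])
  hence "((\<lambda>t. (f (x + t *\<^sub>R v) - f x) / t) \<longlongrightarrow> D v) (at 0)"
    unfolding DERIV_def by simp
  thus ?thesis by (rule tendsto_mono[OF at_le, rotated]) simp
qed

lemma convex_gradient_ineq:
  fixes f :: "'x::real_inner \<Rightarrow> real"
  assumes cv: "convex_on S f" and x: "x \<in> S" and y: "y \<in> S"
    and d: "(f has_derivative (\<lambda>v. v \<bullet> g)) (at x)"
  shows "f x + (y - x) \<bullet> g \<le> f y"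
proof -
  have lim: "((\<lambda>t. (f (x + t *\<^sub>R (y - x)) - f x) / t) \<longlongrightarrow> (y - x) \<bullet> g) (at_right 0)"
    using dir_deriv_tendsto[OF d] by simp
  have "\<forall>\<^sub>F t in at_right 0. (f (x + t *\<^sub>R (y - x)) - f x) / t \<le> f y - f x"
    unfolding eventually_at_right_field
  proof (intro exI[of _ 1] conjI allI impI)
    fix t :: real assume t: "0 < t" "t < 1"
    have "f ((1 - t) *\<^sub>R x + t *\<^sub>R y) \<le> (1 - t) * f x + t * f y"
      using t by (intro convex_onD[OF cv] x y) auto
    moreover have "x + t *\<^sub>R (y - x) = (1 - t) *\<^sub>R x + t *\<^sub>R y" by (simp add: algebra_simps)
    ultimately have "f (x + t *\<^sub>R (y - x)) - f x \<le> t * (f y - f x)" by (simp add: algebra_simps)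
    thus "(f (x + t *\<^sub>R (y - x)) - f x) / t \<le> f y - f x" using t by (simp add: divide_simps mult.commute)
  qed simp
  hence "(y - x) \<bullet> g \<le> f y - f x"
    by (intro tendsto_upperbound[OF lim]) simp_all
  thus ?thesis by simp
qed

lemma local_min_dir:
  fixes f :: "'x::real_normed_vector \<Rightarrow> real"
  assumes d: "(f has_derivative D) (at x)"
    and m: "\<And>t. 0 < t \<Longrightarrow> t < 1 \<Longrightarrow> f x \<le> f (x + t *\<^sub>R v)"
  shows "0 \<le> D v"
proof -
  have "\<forall>\<^sub>F t in at_right 0. 0 \<le> (f (x + t *\<^sub>R v) - f x) / t"
    unfolding eventually_at_right_field
    by (intro exI[of _ 1] conjI allI impI) (auto intro!: divide_nonneg_pos m)
  thus ?thesis by (intro tendsto_lowerbound[OF dir_deriv_tendsto[OF d]]) simp_all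
qed

context
  fixes h :: "'x::euclidean_space \<Rightarrow> ereal"
  assumes leg: "legendre h"
begin

abbreviation "fh \<equiv> (\<lambda>y. real_of_ereal (h y))"

lemma leg_convex: "convex (edom h)" using leg by (simp add: legendre_def)
lemma leg_convex_on: "convex_on (edom h) fh" using leg by (simp add: legendre_def)

lemma leg_grad: "x \<in> interior (edom h) \<Longrightarrow> (fh has_derivative (\<lambda>v. v \<bullet> grad h x)) (at x)"
  using leg grad_eq[of h x] unfolding legendre_def gderiv_def by blast

lemma leg_grad_ineq: "x \<in> interior (edom h) \<Longrightarrow> y \<in> edom h \<Longrightarrow> fh x + (y - x) \<bullet> grad h x \<le> fh y"
  by (rule convex_gradient_ineq[OF leg_convex_on _ _ leg_grad]) (auto dest: interior_subset[THEN subsetD])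

lemma leg_blowup: "(\<And>n. X n \<in> interior (edom h)) \<Longrightarrow> X \<longlonglongrightarrow> x \<Longrightarrow> x \<notin> interior (edom h) \<Longrightarrow>
   filterlim (\<lambda>n. norm (grad h (X n))) at_top sequentially"
  using leg unfolding legendre_def by blast

lemma leg_bounded_above:
  assumes "cball q r \<subseteq> interior (edom h)"
  shows "\<exists>M. \<forall>z\<in>cball q r. fh z \<le> M"
proof -
  have "convex_on (interior (edom h)) fh"
    using convex_on_subset[OF leg_convex_on interior_subset] convex_interior[OF leg_convex] by blast
  hence "continuous_on (interior (edom h)) fh" by (intro convex_on_continuous) auto
  hence "continuous_on (cball q r) fh" using assms continuous_on_subset by blast
  hence "compact (fh ` cball q r)" by (intro compact_continuous_image) auto
  hence "bounded (fh ` cball q r)" by (rule compact_imp_bounded)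
  then obtain B where "\<forall>y\<in>fh ` cball q r. norm y \<le> B" by (auto simp: bounded_iff)
  thus ?thesis by (metis abs_le_D1 image_eqI real_norm_def)
qed

lemma leg_min_interior:
  assumes p: "p \<in> edom h" and q: "q \<in> interior (edom h)"
    and minp: "\<And>t. 0 < t \<Longrightarrow> t < 1 \<Longrightarrow> fh p + c \<bullet> p \<le> fh (p + t *\<^sub>R (q - p)) + c \<bullet> (p + t *\<^sub>R (q - p))"
  shows "p \<in> interior (edom h)"
proof (rule ccontr)
  assume np: "p \<notin> interior (edom h)"
  hence pq: "p \<noteq> q" using q by auto
  define t where "t n = 1 / (real n + 2)" for n
  have t01: "0 < t n" "t n < 1" "t n \<le> 1/2" for n by (auto simp: t_def divide_simps)
  define X where "X n = p + t n *\<^sub>R (q - p)" for n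
  have seg: "open_segment q p \<subseteq> interior (edom h)"
    using leg_convex q p closure_subset by (intro in_interior_closure_convex_segment) auto
  have Xint: "X n \<in> interior (edom h)" for n
  proof -
    have "X n = (1 - (1 - t n)) *\<^sub>R q + (1 - t n) *\<^sub>R p" by (simp add: X_def algebra_simps)
    hence "X n \<in> open_segment q p" using pq t01[of n] unfolding in_segment by (intro conjI exI[of _ "1 - t n"]) auto
    thus ?thesis using seg by auto
  qed
  have "filterlim (\<lambda>n. 2 + real n) at_top sequentially"
    by (rule filterlim_tendsto_add_at_top[OF tendsto_const filterlim_real_sequentially])
  hence "filterlim (\<lambda>n. real n + 2) at_top sequentially" by (simp add: add.commute)
  hence "t \<longlonglongrightarrow> 0" unfolding t_def
    by (rule real_tendsto_divide_at_top[OF tendsto_const])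
  hence "X \<longlonglongrightarrow> p + 0 *\<^sub>R (q - p)" unfolding X_def by (intro tendsto_intros)
  hence XL: "X \<longlonglongrightarrow> p" by simp
  have blow: "filterlim (\<lambda>n. norm (grad h (X n))) at_top sequentially"
    by (rule leg_blowup[OF Xint XL np])
  obtain r where r: "r > 0" "cball q r \<subseteq> interior (edom h)"
    using q open_interior open_contains_cball by blast
  obtain M where M: "\<And>z. z \<in> cball q r \<Longrightarrow> fh z \<le> M" using leg_bounded_above[OF r(2)] by blast
  define L where "L = fh q - norm (p - q) * norm (grad h q)"
  define B where "B = (M - L + \<bar>c \<bullet> (q - p)\<bar>) / r"
  have bound: "norm (grad h (X n)) \<le> B" for n
  proof -
    let ?g = "grad h (X n)"
    define z where "z = (if ?g = 0 then q else q + (r / norm ?g) *\<^sub>R ?g)"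
    have zc: "z \<in> cball q r" using r by (auto simp: z_def dist_norm)
    have zg: "(z - X n) \<bullet> ?g = (q - X n) \<bullet> ?g + r * norm ?g"
      by (auto simp: z_def inner_diff_left inner_add_left power2_norm_eq_inner[symmetric] power2_eq_square)
    have "z \<in> edom h" using zc r interior_subset by blast
    hence up: "fh (X n) + (z - X n) \<bullet> ?g \<le> M"
      using leg_grad_ineq[OF Xint[of n], of z] M[OF zc] by linarith
    have "fh q + (X n - q) \<bullet> grad h q \<le> fh (X n)"
      using leg_grad_ineq[OF q, of "X n"] Xint interior_subset by blast
    moreover have "\<bar>(X n - q) \<bullet> grad h q\<bar> \<le> norm (p - q) * norm (grad h q)"
    proof -
      have "X n - q = (1 - t n) *\<^sub>R (p - q)" by (simp add: X_def algebra_simps)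
      hence "norm (X n - q) = (1 - t n) * norm (p - q)" using t01[of n] by simp
      also have "\<dots> \<le> norm (p - q)" using t01[of n] by (intro mult_left_le_one_le) auto
      finally show ?thesis using Cauchy_Schwarz_ineq2[of "X n - q" "grad h q"]
        by (meson mult_right_mono norm_ge_zero order_trans)
    qed
    ultimately have low: "L \<le> fh (X n)" unfolding L_def by linarith
    have gp: "fh (X n) + (p - X n) \<bullet> ?g \<le> fh p"
      using leg_grad_ineq[OF Xint p] .
    have pX: "p - X n = - t n *\<^sub>R (q - p)" by (simp add: X_def)
    have mn: "fh p + c \<bullet> p \<le> fh (X n) + c \<bullet> p + t n * (c \<bullet> (q - p))"
      using minp[OF t01(1,2), of n] by (simp add: X_def inner_add_right)
    have "0 \<le> t n * ((q - p) \<bullet> ?g + c \<bullet> (q - p))"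
      using gp mn unfolding pX by (simp add: algebra_simps)
    hence A: "- (c \<bullet> (q - p)) \<le> (q - p) \<bullet> ?g"
      using t01[of n] by (simp add: zero_le_mult_iff)
    have qX: "(q - X n) \<bullet> ?g = (1 - t n) * ((q - p) \<bullet> ?g)"
      by (simp add: X_def algebra_simps inner_diff_left)
    have "- \<bar>c \<bullet> (q - p)\<bar> \<le> (1 - t n) * (- (c \<bullet> (q - p)))"
    proof -
      have s: "0 \<le> 1 - t n" "1 - t n \<le> 1" using t01[of n] by auto
      have "(1 - t n) * \<bar>c \<bullet> (q - p)\<bar> \<le> \<bar>c \<bullet> (q - p)\<bar>"
        using s by (intro mult_left_le_one_le) auto
      moreover have "(1 - t n) * (- \<bar>c \<bullet> (q - p)\<bar>) \<le> (1 - t n) * (- (c \<bullet> (q - p)))"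
        using s by (intro mult_left_mono) auto
      ultimately show ?thesis by simp
    qed
    also have "\<dots> \<le> (1 - t n) * ((q - p) \<bullet> ?g)"
      using A t01[of n] by (intro mult_left_mono) auto
    finally have "- \<bar>c \<bullet> (q - p)\<bar> \<le> (q - X n) \<bullet> ?g" using qX by simp
    hence "r * norm ?g \<le> M - L + \<bar>c \<bullet> (q - p)\<bar>" using up zg low by linarith
    thus ?thesis unfolding B_def using r by (simp add: field_simps)
  qed
  have "\<forall>\<^sub>F n in sequentially. B + 1 \<le> norm (grad h (X n))"
    using blow by (simp add: filterlim_at_top)
  then obtain n where "B + 1 \<le> norm (grad h (X n))" by (meson eventually_sequentially order_refl)
  with bound[of n] show False by linarith
qed

end

lemma vec_of_nth[simp]: "vec_of p $ a = p a" by (simp add: vec_of_def)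

lemma vec_of_inner: "vec_of u \<bullet> vec_of v = (\<Sum>a\<in>UNIV. u a * v a)"
  by (simp add: inner_vec_def)

lemma vec_of_diff: "vec_of u - vec_of v = vec_of (\<lambda>a. u a - v a)"
  by (simp add: vec_eq_iff)

lemma vec_of_lin: "vec_of p + t *\<^sub>R (vec_of q - vec_of p) = vec_of (\<lambda>a. p a + t * (q a - p a))"
  by (simp add: vec_eq_iff)

lemma vec_of_surj: "vec_of (\<lambda>i. y $ i) = y" by (simp add: vec_eq_iff)

lemma simplex_interp:
  assumes "p \<in> prob_simplex" "q \<in> prob_simplex" "0 \<le> t" "t \<le> 1"
  shows "(\<lambda>a. p a + t * (q a - p a)) \<in> prob_simplex"
proof -
  have "0 \<le> p a + t * (q a - p a)" for a
  proof -
    have "p a + t * (q a - p a) = (1 - t) * p a + t * q a" by (simp add: algebra_simps)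
    thus ?thesis using assms by (simp add: prob_simplex_def)
  qed
  moreover have "(\<Sum>a\<in>UNIV. p a + t * (q a - p a)) = 1"
    using assms by (simp add: prob_simplex_def sum.distrib sum_subtractf sum_distrib_left[symmetric])
  ultimately show ?thesis by (simp add: prob_simplex_def)
qed

lemma pos_simplex_rel_interior:
  fixes u :: "'a::finite \<Rightarrow> real"
  assumes u: "u \<in> prob_simplex" and pos: "\<And>a. 0 < u a"
  shows "vec_of u \<in> rel_interior (vec_of ` (prob_simplex :: ('a \<Rightarrow> real) set))"
proof -
  let ?S = "vec_of ` (prob_simplex :: ('a \<Rightarrow> real) set)"
  let ?H = "{x::real^'a. (\<chi> i. 1) \<bullet> x = 1}"
  have Heq: "(\<chi> i. 1) \<bullet> x = (\<Sum>i\<in>UNIV. x $ i)" for x :: "real^'a"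
    by (simp add: inner_vec_def)
  have "affine ?H" by (rule affine_hyperplane)
  moreover have "?S \<subseteq> ?H" by (auto simp: Heq prob_simplex_def)
  ultimately have aff: "affine hull ?S \<subseteq> ?H" by (rule hull_minimal[rotated])
  define e where "e = Min (range u)"
  have e: "0 < e" unfolding e_def using pos by (subst Min_gr_iff) auto
  have eu: "e \<le> u a" for a unfolding e_def by (rule Min_le) auto
  have "ball (vec_of u) e \<inter> affine hull ?S \<subseteq> ?S"
  proof
    fix y assume y: "y \<in> ball (vec_of u) e \<inter> affine hull ?S"
    have "0 \<le> y $ i" for i
    proof -
      have "\<bar>(vec_of u - y) $ i\<bar> \<le> norm (vec_of u - y)" by (rule component_le_norm_cart)
      also have "\<dots> < e" using y by (simp add: dist_norm)
      finally have "\<bar>u i - y $ i\<bar> < e" by simp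
      thus ?thesis using eu[of i] by linarith
    qed
    moreover have "(\<Sum>i\<in>UNIV. y $ i) = 1" using y aff by (auto simp: Heq)
    ultimately have "(\<lambda>i. y $ i) \<in> prob_simplex" by (simp add: prob_simplex_def)
    thus "y \<in> ?S" using vec_of_surj[of y] by (metis image_eqI)
  qed
  moreover have "vec_of u \<in> ?S" using u by auto
  ultimately show ?thesis using e by (auto simp: mem_rel_interior_ball)
qed

context
  fixes h :: "real ^ 'a::finite \<Rightarrow> ereal"
  assumes leg: "legendre h"
    and h_dom: "vec_of ` prob_simplex \<subseteq> edom h"
    and h_rint: "rel_interior (vec_of ` (prob_simplex :: ('a \<Rightarrow> real) set)) \<subseteq> rel_interior (edom h)"
begin

lemma dom_simplex: "p \<in> prob_simplex \<Longrightarrow> vec_of p \<in> edom h"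
  using h_dom by auto

lemma pos_interior: "u \<in> prob_simplex \<Longrightarrow> (\<And>a. 0 < u a) \<Longrightarrow> vec_of u \<in> interior (edom h)"
proof -
  assume "u \<in> prob_simplex" "\<And>a. 0 < u a"
  hence "vec_of u \<in> rel_interior (edom h)" using pos_simplex_rel_interior h_rint by blast
  moreover have "interior (edom h) \<noteq> {}" using leg by (simp add: legendre_def)
  ultimately show ?thesis by (simp add: rel_interior_nonempty_interior)
qed

lemma bregman_nonneg:
  "p \<in> prob_simplex \<Longrightarrow> vec_of p' \<in> interior (edom h) \<Longrightarrow> 0 \<le> bregman h p p'"
  using leg_grad_ineq[OF leg, of "vec_of p'" "vec_of p"] dom_simplex
  unfolding bregman_def by (simp add: inner_commute)

lemma three_point:
  fixes Qh :: "'a \<Rightarrow> real" and eta :: real and pk pn :: "'a \<Rightarrow> real"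
  assumes pn: "pn \<in> prob_simplex"
    and minim: "\<forall>p\<in>prob_simplex. eta * (\<Sum>a\<in>UNIV. Qh a * pn a) + bregman h pn pk
                  \<le> eta * (\<Sum>a\<in>UNIV. Qh a * p a) + bregman h p pk"
  shows "vec_of pn \<in> interior (edom h)"
    and "\<And>p. p \<in> prob_simplex \<Longrightarrow>
      eta * (\<Sum>a\<in>UNIV. Qh a * pn a) + bregman h pn pk + bregman h p pn
        \<le> eta * (\<Sum>a\<in>UNIV. Qh a * p a) + bregman h p pk"
proof -
  define c where "c = eta *\<^sub>R vec_of Qh - grad h (vec_of pk)"
  have Fm: "fh h (vec_of pn) + c \<bullet> vec_of pn \<le> fh h (vec_of p) + c \<bullet> vec_of p" if p: "p \<in> prob_simplex" for p
  proof -
    have "eta * (\<Sum>a\<in>UNIV. Qh a * pn a) + bregman h pn pk \<le> eta * (\<Sum>a\<in>UNIV. Qh a * p a) + bregman h p pk"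
      using minim p by blast
    thus ?thesis
      unfolding bregman_def c_def vec_of_inner[symmetric]
      by (simp add: inner_diff_left inner_diff_right inner_commute algebra_simps)
  qed
  define u :: "'a \<Rightarrow> real" where "u a = 1 / real CARD('a)" for a
  have u: "u \<in> prob_simplex" "\<And>a. 0 < u a" by (auto simp: u_def prob_simplex_def)
  show int: "vec_of pn \<in> interior (edom h)"
  proof (rule leg_min_interior[OF leg dom_simplex[OF pn] pos_interior[OF u]])
    fix t :: real assume t: "0 < t" "t < 1"
    show "fh h (vec_of pn) + c \<bullet> vec_of pn \<le>
          fh h (vec_of pn + t *\<^sub>R (vec_of u - vec_of pn)) + c \<bullet> (vec_of pn + t *\<^sub>R (vec_of u - vec_of pn))"
      unfolding vec_of_lin using t by (intro Fm simplex_interp pn u) auto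
  qed
  fix p :: "'a \<Rightarrow> real" assume p: "p \<in> prob_simplex"
  have der: "((\<lambda>x. fh h x + c \<bullet> x) has_derivative (\<lambda>v. v \<bullet> grad h (vec_of pn) + v \<bullet> c)) (at (vec_of pn))"
    by (intro has_derivative_add leg_grad[OF leg int]) (auto intro!: derivative_eq_intros simp: inner_commute)
  have "0 \<le> (vec_of p - vec_of pn) \<bullet> grad h (vec_of pn) + (vec_of p - vec_of pn) \<bullet> c"
  proof (rule local_min_dir[OF der])
    fix t :: real assume t: "0 < t" "t < 1"
    show "fh h (vec_of pn) + c \<bullet> vec_of pn \<le>
          fh h (vec_of pn + t *\<^sub>R (vec_of p - vec_of pn)) + c \<bullet> (vec_of pn + t *\<^sub>R (vec_of p - vec_of pn))"
      unfolding vec_of_lin using t by (intro Fm simplex_interp pn p) auto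
  qed
  thus "eta * (\<Sum>a\<in>UNIV. Qh a * pn a) + bregman h pn pk + bregman h p pn
        \<le> eta * (\<Sum>a\<in>UNIV. Qh a * p a) + bregman h p pk"
    unfolding bregman_def c_def vec_of_inner[symmetric]
    by (simp add: inner_diff_left inner_diff_right inner_commute algebra_simps)
qed

end

lemma recur_alg:
  fixes M \<gamma> \<eta> \<eta>' \<tau> X \<Delta> \<Delta>' Dk Dk' :: real
  assumes M: "1 \<le> M" and g: "0 < \<gamma>" "\<gamma> < 1" and eta: "0 < \<eta>" "\<eta> / \<gamma> \<le> \<eta>'"
    and D': "0 \<le> Dk'"
    and h1: "X + (1 - \<gamma>) * \<Delta> - 2 * \<tau> \<le> (Dk - Dk') / \<eta>"
    and h2: "\<Delta>' - \<Delta> \<le> X / M + 2 * \<tau> / (1 - \<gamma>)"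
  shows "\<Delta>' + Dk' / ((M - (1 - \<gamma>)) * \<eta>') \<le>
     (1 - (1 - \<gamma>) / M) * (\<Delta> + Dk / ((M - (1 - \<gamma>)) * \<eta>)) + (2 * \<tau> / (1 - \<gamma>) + 2 * \<tau> / M)"
proof -
  define c where "c = M - (1 - \<gamma>)"
  have c: "0 < c" using M g by (simp add: c_def)
  have Mp: "0 < M" using M by simp
  have "X \<le> (Dk - Dk') / \<eta> - (1 - \<gamma>) * \<Delta> + 2 * \<tau>" using h1 by simp
  hence "X / M \<le> ((Dk - Dk') / \<eta> - (1 - \<gamma>) * \<Delta> + 2 * \<tau>) / M" using Mp by (simp add: divide_right_mono)
  also have "\<dots> = Dk / (M * \<eta>) - Dk' / (M * \<eta>) - (1 - \<gamma>) / M * \<Delta> + 2 * \<tau> / M"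
    using Mp eta by (simp add: field_simps)
  finally have A0: "X / M \<le> Dk / (M * \<eta>) - Dk' / (M * \<eta>) - (1 - \<gamma>) / M * \<Delta> + 2 * \<tau> / M" .
  have "\<Delta> - (1 - \<gamma>) / M * \<Delta> = (c / M) * \<Delta>" using Mp by (simp add: c_def field_simps)
  hence A: "\<Delta>' \<le> (c / M) * \<Delta> + Dk / (M * \<eta>) - Dk' / (M * \<eta>) + (2 * \<tau> / (1 - \<gamma>) + 2 * \<tau> / M)"
    using h2 A0 by linarith
  have eta'p: "0 < \<eta>'" using eta g by (meson divide_pos_pos less_le_trans)
  have "M * \<eta> \<le> c * \<eta>'"
  proof -
    have "0 \<le> (1 - \<gamma>) * (M - 1)" using M g by (intro mult_nonneg_nonneg) auto
    hence "\<gamma> * M \<le> c" unfolding c_def by (simp add: algebra_simps)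
    hence "\<gamma> * M * \<eta>' \<le> c * \<eta>'" using eta'p by (intro mult_right_mono) auto
    moreover have "\<eta> \<le> \<gamma> * \<eta>'" using eta g by (simp add: divide_le_eq mult.commute)
    hence "M * \<eta> \<le> M * (\<gamma> * \<eta>')" using Mp by simp
    ultimately show ?thesis by (simp add: algebra_simps)
  qed
  hence B: "Dk' / (c * \<eta>') \<le> Dk' / (M * \<eta>)"
    using D' Mp eta eta'p c by (intro divide_left_mono) auto
  have C: "(1 - (1 - \<gamma>) / M) = c / M" using Mp by (simp add: c_def field_simps)
  have "(c / M) * (Dk / (c * \<eta>)) = Dk / (M * \<eta>)" using c Mp eta by (simp add: field_simps)
  thus ?thesis unfolding C using A B by (simp add: c_def[symmetric] distrib_left)
qed

lemma iter_bound:
  fixes \<Phi> :: "nat \<Rightarrow> real"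
  assumes "\<And>k. \<Phi> (Suc k) \<le> r * \<Phi> k + e" "0 \<le> r" "r < 1" "0 \<le> e"
  shows "\<Phi> k \<le> r ^ k * \<Phi> 0 + e / (1 - r)"
proof (induction k)
  case 0
  then show ?case using assms by simp
next
  case (Suc k)
  have "\<Phi> (Suc k) \<le> r * (r ^ k * \<Phi> 0 + e / (1 - r)) + e"
    using assms(1)[of k] mult_left_mono[OF Suc assms(2)] by linarith
  also have "\<dots> = r ^ Suc k * \<Phi> 0 + e / (1 - r)" using assms by (simp add: field_simps)
  finally show ?case .
qed

lemma ratio_entry_def: "ratio_norm p q = Max (range (\<lambda>s. if q s = 0 then (if p s = 0 then 1 else \<infinity>) else ereal (p s / q s)))"
  by (rule ratio_norm_def)

lemma ratio_norm_ge1: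
  fixes p q :: "'s::finite \<Rightarrow> real"
  assumes p: "p \<in> prob_simplex" and q: "q \<in> prob_simplex"
  shows "1 \<le> ratio_norm p q"
proof -
  obtain s where s: "q s \<le> p s"
  proof (rule ccontr)
    assume "\<not> thesis"
    hence "\<forall>s. p s < q s" using that by (meson not_le)
    hence "(\<Sum>s\<in>UNIV. p s) < (\<Sum>s\<in>UNIV. q s)" by (intro sum_strict_mono) auto
    thus False using simplex_sum[OF p] simplex_sum[OF q] by simp
  qed
  let ?e = "\<lambda>s. if q s = 0 then (if p s = 0 then 1 else \<infinity>) else ereal (p s / q s)"
  have "1 \<le> ?e s"
  proof (cases "q s = 0")
    case False
    hence "0 < q s" using simplex_nonneg[OF q, of s] by simp
    thus ?thesis using s False by (simp add: divide_simps)
  qed simp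
  also have "?e s \<le> Max (range ?e)" by (rule Max_ge) auto
  finally show ?thesis unfolding ratio_norm_def .
qed

lemma ratio_norm_fin:
  fixes p q :: "'s::finite \<Rightarrow> real"
  assumes p: "p \<in> prob_simplex" and q: "q \<in> prob_simplex" and M: "ratio_norm p q = ereal M"
  shows "p s \<le> M * q s"
proof -
  let ?e = "\<lambda>s. if q s = 0 then (if p s = 0 then 1 else \<infinity>) else ereal (p s / q s)"
  have le: "?e s \<le> ereal M" unfolding M[symmetric] ratio_norm_def by (rule Max_ge) auto
  show ?thesis
  proof (cases "q s = 0")
    case True
    then show ?thesis using le simplex_nonneg[OF p, of s] by (auto split: if_splits)
  next
    case False
    hence "0 < q s" using simplex_nonneg[OF q, of s] by simp
    thus ?thesis using le False by (simp add: divide_simps mult.commute)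
  qed
qed

lemma err_avg:
  assumes p: "p \<in> prob_simplex" and e: "\<And>a. \<bar>e a\<bar> \<le> \<tau>"
  shows "\<bar>\<Sum>a\<in>UNIV. e a * p a\<bar> \<le> \<tau>"
proof -
  have "(\<Sum>a\<in>UNIV. p a * e a) \<le> \<tau>" using e by (intro simplex_avg_le[OF p]) (simp add: abs_le_iff)
  moreover have "- \<tau> \<le> (\<Sum>a\<in>UNIV. p a * e a)" using e
    by (intro simplex_avg_ge[OF p]) (simp add: abs_le_iff, smt (verit))
  ultimately show ?thesis by (simp add: mult.commute abs_le_iff)
qed

lemma err_diff:
  assumes p: "p \<in> prob_simplex" and p': "p' \<in> prob_simplex" and e: "\<And>a. \<bar>Qh a - Qt a\<bar> \<le> \<tau>"
  shows "\<bar>(\<Sum>a\<in>UNIV. (p a - p' a) * Qt a) - (\<Sum>a\<in>UNIV. Qh a * (p a - p' a))\<bar> \<le> 2 * \<tau>"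
proof -
  have eq: "(\<Sum>a\<in>UNIV. (p a - p' a) * Qt a) - (\<Sum>a\<in>UNIV. Qh a * (p a - p' a))
     = (\<Sum>a\<in>UNIV. (Qh a - Qt a) * p' a) - (\<Sum>a\<in>UNIV. (Qh a - Qt a) * p a)"
    by (simp add: algebra_simps sum_subtractf sum.distrib)
  show ?thesis unfolding eq using err_avg[where e="\<lambda>a. Qh a - Qt a", OF p e] err_avg[where e="\<lambda>a. Qh a - Qt a", OF p' e] by linarith
qed

lemma main_real:
  fixes P :: "'s::finite \<Rightarrow> 'a::finite \<Rightarrow> 's \<Rightarrow> real"
    and R :: "'s \<Rightarrow> 'a \<Rightarrow> real"
    and \<gamma> :: real and \<tau> :: real
    and \<rho> :: "'s \<Rightarrow> real"
    and h :: "real ^ 'a \<Rightarrow> ereal"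
    and \<pi>star :: "'s \<Rightarrow> 'a \<Rightarrow> real"
    and \<pi> :: "nat \<Rightarrow> 's \<Rightarrow> 'a \<Rightarrow> real"
    and Qhat :: "nat \<Rightarrow> 's \<Rightarrow> 'a \<Rightarrow> real"
    and \<eta> :: "nat \<Rightarrow> real"
  assumes P_stoch: "\<And>s a. P s a \<in> prob_simplex"
    and R_range: "\<And>s a. 0 \<le> R s a \<and> R s a \<le> 1"
    and gamma: "0 < \<gamma>" "\<gamma> < 1"
    and h_leg: "legendre h"
    and h_dom: "vec_of ` prob_simplex \<subseteq> edom h"
    and h_rint: "rel_interior (vec_of ` (prob_simplex :: ('a \<Rightarrow> real) set)) \<subseteq> rel_interior (edom h)"
    and opt: "\<pi>star \<in> policies"
             "\<forall>\<pi>'\<in>policies. \<forall>s. V P R \<gamma> \<pi>star s \<le> V P R \<gamma> \<pi>' s"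
    and init: "\<pi> 0 \<in> rint_policies"
    and update: "\<And>k s. \<pi> (Suc k) s \<in> prob_simplex \<and>
        (\<forall>p\<in>prob_simplex.
           \<eta> k * (\<Sum>a\<in>UNIV. Qhat k s a * \<pi> (Suc k) s a) + bregman h (\<pi> (Suc k) s) (\<pi> k s)
           \<le> \<eta> k * (\<Sum>a\<in>UNIV. Qhat k s a * p a) + bregman h p (\<pi> k s))"
    and err: "\<And>k s a. \<bar>Qhat k s a - Q P R \<gamma> (\<pi> k) s a\<bar> \<le> \<tau>"
    and rho: "\<rho> \<in> prob_simplex"
    and eta_pos: "\<And>k. 0 < \<eta> k"
    and eta0: "\<eta> 0 \<ge> (1 - \<gamma>) / \<gamma> *
                 (\<Sum>s\<in>UNIV. visit_rho P \<gamma> \<rho> \<pi>star s * bregman h (\<pi>star s) (\<pi> 0 s))"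
    and eta_growth: "\<And>k. \<eta> (Suc k) \<ge> \<eta> k / \<gamma>"
  shows "0 \<le> \<tau>"
    and "V_rho_star P R \<gamma> \<rho> = V_rho P R \<gamma> \<rho> \<pi>star"
    and "\<And>k. V_rho P R \<gamma> \<rho> (\<pi> k) - V_rho P R \<gamma> \<rho> \<pi>star \<le> 1 / (1 - \<gamma>)"
    and "\<And>k M. ratio_norm (visit_rho P \<gamma> \<rho> \<pi>star) \<rho> = ereal M \<Longrightarrow>
          V_rho P R \<gamma> \<rho> (\<pi> k) - V_rho P R \<gamma> \<rho> \<pi>star
            \<le> (1 - (1 - \<gamma>) / M) ^ k * (2 / (1 - \<gamma>)) + 4 * (M / (1 - \<gamma>)) / (1 - \<gamma>) * \<tau>"
proof -
  interpret mdp P R \<gamma> using P_stoch R_range gamma by unfold_locales auto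
  show tau0: "0 \<le> \<tau>" using err[of 0 undefined undefined] by linarith
  have pol: "\<pi> k \<in> policies" for k
    using init update by (cases k) (auto simp: rint_policies_def policies_def)
  have pist: "\<pi>star \<in> policies" by (rule opt(1))
  have simp_pi: "\<pi> k s \<in> prob_simplex" for k s using pol policies_simplex by blast
  have simp_st: "\<pi>star s \<in> prob_simplex" for s using pist policies_simplex by blast
  have int: "vec_of (\<pi> k s) \<in> interior (edom h)" for k s
  proof (cases k)
    case 0
    then show ?thesis using init pos_interior[OF h_leg h_dom h_rint, of "\<pi> 0 s"]
      by (auto simp: rint_policies_def policies_def)
  next
    case (Suc j)
    then show ?thesis using three_point(1)[OF h_leg h_dom h_rint, of "\<pi> (Suc j) s" "\<eta> j" "Qhat j s" "\<pi> j s"]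
      update[of j s] by blast
  qed
  have tp: "\<eta> k * (\<Sum>a\<in>UNIV. Qhat k s a * \<pi> (Suc k) s a) + bregman h (\<pi> (Suc k) s) (\<pi> k s)
              + bregman h p (\<pi> (Suc k) s)
            \<le> \<eta> k * (\<Sum>a\<in>UNIV. Qhat k s a * p a) + bregman h p (\<pi> k s)" if p: "p \<in> prob_simplex" for k s p
    using three_point(2)[OF h_leg h_dom h_rint, of "\<pi> (Suc k) s" "\<eta> k" "Qhat k s" "\<pi> k s" p] update[of k s] p
    by blast
  have bn: "0 \<le> bregman h p (\<pi> k s)" if "p \<in> prob_simplex" for p k s
    using bregman_nonneg[OF h_leg h_dom h_rint that int] .
  have bself: "bregman h p p = 0" for p by (simp add: bregman_def)
  have Vrho_bounds: "0 \<le> V_rho P R \<gamma> \<rho> \<pi>' \<and> V_rho P R \<gamma> \<rho> \<pi>' \<le> 1 / (1 - \<gamma>)" if "\<pi>' \<in> policies" for \<pi>'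
    unfolding V_rho_def using V_bounds[OF that] rho by (metis simplex_avg_ge simplex_avg_le)
  have minV: "V_rho P R \<gamma> \<rho> \<pi>star \<le> V_rho P R \<gamma> \<rho> \<pi>'" if "\<pi>' \<in> policies" for \<pi>'
    unfolding V_rho_def using opt(2) that simplex_nonneg[OF rho]
    by (intro sum_mono mult_left_mono) auto
  show Vst: "V_rho_star P R \<gamma> \<rho> = V_rho P R \<gamma> \<rho> \<pi>star"
    unfolding V_rho_star_def by (rule cInf_eq_minimum) (use pist minV in auto)
  show "V_rho P R \<gamma> \<rho> (\<pi> k) - V_rho P R \<gamma> \<rho> \<pi>star \<le> 1 / (1 - \<gamma>)" for k
    using Vrho_bounds[OF pol[of k]] Vrho_bounds[OF pist] by linarith
  fix k M
  assume M: "ratio_norm (visit_rho P \<gamma> \<rho> \<pi>star) \<rho> = ereal M"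
  show "V_rho P R \<gamma> \<rho> (\<pi> k) - V_rho P R \<gamma> \<rho> \<pi>star
            \<le> (1 - (1 - \<gamma>) / M) ^ k * (2 / (1 - \<gamma>)) + 4 * (M / (1 - \<gamma>)) / (1 - \<gamma>) * \<tau>"
  proof -
  define d where "d = visit_rho P \<gamma> \<rho> \<pi>star"
  have d_simp: "d \<in> prob_simplex" unfolding d_def by (rule visit_rho_simplex[OF pist rho])
  have dM: "d s \<le> M * \<rho> s" for s unfolding d_def by (rule ratio_norm_fin[OF visit_rho_simplex[OF pist rho] rho M])
  have M1: "1 \<le> M" using ratio_norm_ge1[OF visit_rho_simplex[OF pist rho] rho] M by simp
  define \<Delta> where "\<Delta> j = V_rho P R \<gamma> \<rho> (\<pi> j) - V_rho P R \<gamma> \<rho> \<pi>star" for j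
  define Dst where "Dst j = (\<Sum>s\<in>UNIV. d s * bregman h (\<pi>star s) (\<pi> j s))" for j
  define A where "A j s = (\<Sum>a\<in>UNIV. Qhat j s a * (\<pi> (Suc j) s a - \<pi> j s a))" for j s
  define X where "X j = (\<Sum>s\<in>UNIV. d s * A j s)" for j
  have Dst_nn: "0 \<le> Dst j" for j unfolding Dst_def
    using d_simp by (intro sum_nonneg mult_nonneg_nonneg simplex_nonneg[OF d_simp] bn simp_st)
  have A_le: "A j s \<le> 0" for j s
  proof -
    have "\<eta> j * (\<Sum>a\<in>UNIV. Qhat j s a * \<pi> (Suc j) s a) + bregman h (\<pi> (Suc j) s) (\<pi> j s)
              + bregman h (\<pi> j s) (\<pi> (Suc j) s) \<le> \<eta> j * (\<Sum>a\<in>UNIV. Qhat j s a * \<pi> j s a)"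
      using tp[OF simp_pi[of j s], of j s] bself by simp
    moreover have "0 \<le> bregman h (\<pi> (Suc j) s) (\<pi> j s)" "0 \<le> bregman h (\<pi> j s) (\<pi> (Suc j) s)"
      using bn simp_pi by auto
    ultimately have "\<eta> j * A j s \<le> 0" unfolding A_def
      by (simp add: right_diff_distrib sum_subtractf)
    thus ?thesis using eta_pos[of j] by (simp add: mult_le_0_iff)
  qed
  have dsum: "(\<Sum>s\<in>UNIV. d s) = 1" using simplex_sum[OF d_simp] .
  define G where "G j s = (\<Sum>a\<in>UNIV. (\<pi> (Suc j) s a - \<pi> j s a) * Q P R \<gamma> (\<pi> j) s a)" for j s
  have GA: "G j s \<le> A j s + 2 * \<tau>" for j s
    using err_diff[where p="\<pi> (Suc j) s" and p'="\<pi> j s" and Qh="Qhat j s" and Qt="Q P R \<gamma> (\<pi> j) s" and \<tau>=\<tau>, OF simp_pi simp_pi err]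
    unfolding G_def A_def by (simp add: abs_le_iff)
  have F3: "\<Delta> (Suc j) - \<Delta> j \<le> X j / M + 2 * \<tau> / (1 - \<gamma>)" for j
  proof -
    define d' where "d' = visit_rho P \<gamma> \<rho> (\<pi> (Suc j))"
    have d'_simp: "d' \<in> prob_simplex" unfolding d'_def by (rule visit_rho_simplex[OF pol rho])
    have "\<Delta> (Suc j) - \<Delta> j = (\<Sum>y\<in>UNIV. d' y * G j y) / (1 - \<gamma>)"
      unfolding \<Delta>_def d'_def G_def using pdl[OF pol[of j] pol[of "Suc j"], of \<rho>] by simp
    also have "(\<Sum>y\<in>UNIV. d' y * G j y) \<le> (\<Sum>y\<in>UNIV. d' y * (A j y + 2 * \<tau>))"
      by (intro sum_mono mult_left_mono GA simplex_nonneg[OF d'_simp])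
    also have "\<dots> = (\<Sum>y\<in>UNIV. d' y * A j y) + 2 * \<tau>"
      using simplex_sum[OF d'_simp] by (simp add: distrib_left sum.distrib sum_distrib_right[symmetric])
    also have "(\<Sum>y\<in>UNIV. d' y * A j y) \<le> (\<Sum>y\<in>UNIV. ((1 - \<gamma>) * \<rho> y) * A j y)"
      unfolding d'_def by (intro sum_mono mult_right_mono_neg A_le visit_rho_ge[OF pol rho])
    also have "\<dots> = (1 - \<gamma>) * (\<Sum>y\<in>UNIV. \<rho> y * A j y)" by (simp add: sum_distrib_left mult.assoc)
    finally have a: "\<Delta> (Suc j) - \<Delta> j \<le> ((1 - \<gamma>) * (\<Sum>y\<in>UNIV. \<rho> y * A j y) + 2 * \<tau>) / (1 - \<gamma>)"
      using gamma by (simp add: divide_right_mono)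
    have "M * (\<Sum>y\<in>UNIV. \<rho> y * A j y) = (\<Sum>y\<in>UNIV. (M * \<rho> y) * A j y)"
      by (simp add: sum_distrib_left mult.assoc)
    also have "\<dots> \<le> X j" unfolding X_def by (intro sum_mono mult_right_mono_neg A_le dM)
    finally have "(\<Sum>y\<in>UNIV. \<rho> y * A j y) \<le> X j / M" using M1 by (simp add: field_simps)
    moreover have "((1 - \<gamma>) * (\<Sum>y\<in>UNIV. \<rho> y * A j y) + 2 * \<tau>) / (1 - \<gamma>) = (\<Sum>y\<in>UNIV. \<rho> y * A j y) + 2 * \<tau> / (1 - \<gamma>)"
      using gamma by (simp add: field_simps)
    ultimately show ?thesis using a by linarith
  qed
  have F4: "(\<Sum>s\<in>UNIV. d s * (\<Sum>a\<in>UNIV. (\<pi> j s a - \<pi>star s a) * Q P R \<gamma> (\<pi> j) s a)) = (1 - \<gamma>) * \<Delta> j" for j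
  proof -
    have "- \<Delta> j = (\<Sum>y\<in>UNIV. d y * (\<Sum>a\<in>UNIV. (\<pi>star y a - \<pi> j y a) * Q P R \<gamma> (\<pi> j) y a)) / (1 - \<gamma>)"
      unfolding \<Delta>_def d_def using pdl[OF pol[of j] pist, of \<rho>] by simp
    moreover have "(\<Sum>y\<in>UNIV. d y * (\<Sum>a\<in>UNIV. (\<pi>star y a - \<pi> j y a) * Q P R \<gamma> (\<pi> j) y a))
      = - (\<Sum>s\<in>UNIV. d s * (\<Sum>a\<in>UNIV. (\<pi> j s a - \<pi>star s a) * Q P R \<gamma> (\<pi> j) s a))"
      by (simp add: sum_negf[symmetric] left_diff_distrib sum_subtractf right_diff_distrib)
    ultimately show ?thesis using gamma by (simp add: field_simps)
  qed
  have F5: "X j + (1 - \<gamma>) * \<Delta> j - 2 * \<tau> \<le> (Dst j - Dst (Suc j)) / \<eta> j" for j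
  proof -
    have per: "\<eta> j * (A j s + (\<Sum>a\<in>UNIV. (\<pi> j s a - \<pi>star s a) * Q P R \<gamma> (\<pi> j) s a) - 2 * \<tau>)
       \<le> bregman h (\<pi>star s) (\<pi> j s) - bregman h (\<pi>star s) (\<pi> (Suc j) s)" for s
    proof -
      have "\<eta> j * (\<Sum>a\<in>UNIV. Qhat j s a * \<pi> (Suc j) s a) + bregman h (\<pi>star s) (\<pi> (Suc j) s)
            \<le> \<eta> j * (\<Sum>a\<in>UNIV. Qhat j s a * \<pi>star s a) + bregman h (\<pi>star s) (\<pi> j s)"
        using tp[OF simp_st, of j s s] bn[OF simp_pi, of "Suc j" s j s] by linarith
      hence "\<eta> j * ((\<Sum>a\<in>UNIV. Qhat j s a * \<pi> (Suc j) s a) - (\<Sum>a\<in>UNIV. Qhat j s a * \<pi>star s a))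
            \<le> bregman h (\<pi>star s) (\<pi> j s) - bregman h (\<pi>star s) (\<pi> (Suc j) s)"
        by (simp add: right_diff_distrib)
      moreover have "(\<Sum>a\<in>UNIV. Qhat j s a * \<pi> (Suc j) s a) - (\<Sum>a\<in>UNIV. Qhat j s a * \<pi>star s a)
          = A j s + (\<Sum>a\<in>UNIV. Qhat j s a * (\<pi> j s a - \<pi>star s a))"
        unfolding A_def by (simp add: right_diff_distrib sum_subtractf)
      moreover have "(\<Sum>a\<in>UNIV. (\<pi> j s a - \<pi>star s a) * Q P R \<gamma> (\<pi> j) s a) - 2 * \<tau>
          \<le> (\<Sum>a\<in>UNIV. Qhat j s a * (\<pi> j s a - \<pi>star s a))"
        using err_diff[where p="\<pi> j s" and p'="\<pi>star s" and Qh="Qhat j s" and Qt="Q P R \<gamma> (\<pi> j) s" and \<tau>=\<tau>, OF simp_pi simp_st err]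
        by (simp add: abs_le_iff)
      ultimately show ?thesis using eta_pos[of j]
        by (smt (verit, best) mult_left_mono)
    qed
    define B where "B s = (\<Sum>a\<in>UNIV. (\<pi> j s a - \<pi>star s a) * Q P R \<gamma> (\<pi> j) s a)" for s
    have "(\<Sum>s\<in>UNIV. d s * (\<eta> j * (A j s + B s - 2 * \<tau>)))
        = (\<Sum>s\<in>UNIV. \<eta> j * (d s * A j s) + \<eta> j * (d s * B s) - (\<eta> j * (2 * \<tau>)) * d s)"
      by (rule sum.cong) (simp_all add: algebra_simps)
    also have "\<dots> = \<eta> j * X j + \<eta> j * (\<Sum>s\<in>UNIV. d s * B s) - (\<eta> j * (2 * \<tau>)) * (\<Sum>s\<in>UNIV. d s)"
      by (simp add: sum.distrib sum_subtractf sum_distrib_left X_def)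
    also have "\<dots> = \<eta> j * (X j + (1 - \<gamma>) * \<Delta> j - 2 * \<tau>)"
      unfolding dsum B_def F4 by (simp add: algebra_simps)
    finally have "\<eta> j * (X j + (1 - \<gamma>) * \<Delta> j - 2 * \<tau>)
        = (\<Sum>s\<in>UNIV. d s * (\<eta> j * (A j s + (\<Sum>a\<in>UNIV. (\<pi> j s a - \<pi>star s a) * Q P R \<gamma> (\<pi> j) s a) - 2 * \<tau>)))"
      unfolding B_def by simp
    also have "\<dots> \<le> (\<Sum>s\<in>UNIV. d s * (bregman h (\<pi>star s) (\<pi> j s) - bregman h (\<pi>star s) (\<pi> (Suc j) s)))"
      by (intro sum_mono mult_left_mono per simplex_nonneg[OF d_simp])
    also have "\<dots> = Dst j - Dst (Suc j)" unfolding Dst_def by (simp add: right_diff_distrib sum_subtractf)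
    finally show ?thesis using eta_pos[of j] by (simp add: field_simps)
  qed
  define r where "r = 1 - (1 - \<gamma>) / M"
  define e where "e = 2 * \<tau> / (1 - \<gamma>) + 2 * \<tau> / M"
  define \<Phi> where "\<Phi> j = \<Delta> j + Dst j / ((M - (1 - \<gamma>)) * \<eta> j)" for j
  have rec: "\<Phi> (Suc j) \<le> r * \<Phi> j + e" for j
    unfolding \<Phi>_def r_def e_def
    by (rule recur_alg[OF M1 gamma eta_pos eta_growth Dst_nn F5 F3])
  have r0: "0 \<le> r" "r < 1" unfolding r_def using M1 gamma by (auto simp: field_simps)
  have e0: "0 \<le> e" unfolding e_def using tau0 gamma M1 by auto
  have it: "\<Phi> k \<le> r ^ k * \<Phi> 0 + e / (1 - r)" by (rule iter_bound[of \<Phi> r e, OF rec r0 e0])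
  have cpos: "0 < M - (1 - \<gamma>)" using M1 gamma by simp
  have "\<Delta> k \<le> \<Phi> k" unfolding \<Phi>_def using Dst_nn[of k] cpos eta_pos[of k] by simp
  moreover have "\<Phi> 0 \<le> 2 / (1 - \<gamma>)"
  proof -
    have a: "\<Delta> 0 \<le> 1 / (1 - \<gamma>)" using Vrho_bounds[OF pol[of 0]] Vrho_bounds[OF pist] unfolding \<Delta>_def by linarith
    have "Dst 0 \<le> \<gamma> * \<eta> 0 / (1 - \<gamma>)" using eta0 gamma unfolding Dst_def d_def by (simp add: field_simps)
    moreover have "\<gamma> * \<eta> 0 \<le> (M - (1 - \<gamma>)) * \<eta> 0" using M1 eta_pos[of 0] by (intro mult_right_mono) auto
    ultimately have "Dst 0 \<le> (M - (1 - \<gamma>)) * \<eta> 0 / (1 - \<gamma>)" using gamma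
      by (smt (verit) divide_right_mono)
    hence "Dst 0 / ((M - (1 - \<gamma>)) * \<eta> 0) \<le> ((M - (1 - \<gamma>)) * \<eta> 0 / (1 - \<gamma>)) / ((M - (1 - \<gamma>)) * \<eta> 0)"
      using cpos eta_pos[of 0] by (intro divide_right_mono) auto
    also have "\<dots> = 1 / (1 - \<gamma>)" using cpos eta_pos[of 0] by simp
    finally have "Dst 0 / ((M - (1 - \<gamma>)) * \<eta> 0) \<le> 1 / (1 - \<gamma>)" .
    thus ?thesis using a unfolding \<Phi>_def by (simp add: field_simps)
  qed
  hence "r ^ k * \<Phi> 0 \<le> r ^ k * (2 / (1 - \<gamma>))" using r0 by (intro mult_left_mono) auto
  moreover have "e / (1 - r) \<le> 4 * (M / (1 - \<gamma>)) / (1 - \<gamma>) * \<tau>"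
  proof -
    define u where "u = 2 * \<tau> / (1 - \<gamma>)"
    define th where "th = M / (1 - \<gamma>)"
    have u0: "0 \<le> u" unfolding u_def using tau0 gamma by simp
    have th1: "1 \<le> th" unfolding th_def using M1 gamma by simp
    have Mnz: "M \<noteq> 0" using M1 by simp
    have "1 - r = (1 - \<gamma>) / M" by (simp add: r_def)
    hence "e / (1 - r) = e * th" by (simp add: th_def)
    also have "\<dots> = u * th + (2 * \<tau> / M) * (M / (1 - \<gamma>))" unfolding e_def u_def th_def by (rule distrib_right)
    also have "(2 * \<tau> / M) * (M / (1 - \<gamma>)) = u" unfolding u_def using Mnz by simp
    finally have a: "e / (1 - r) = u * th + u" .
    have "u \<le> u * th" using u0 th1 by (simp add: mult_le_cancel_left1)
    moreover have "4 * (M / (1 - \<gamma>)) / (1 - \<gamma>) * \<tau> = 2 * (u * th)"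
      unfolding u_def th_def by (simp add: field_simps)
    ultimately show ?thesis using a by linarith
  qed
  ultimately have "\<Delta> k \<le> (1 - (1 - \<gamma>) / M) ^ k * (2 / (1 - \<gamma>)) + 4 * (M / (1 - \<gamma>)) / (1 - \<gamma>) * \<tau>"
    using it unfolding r_def by linarith
  thus ?thesis unfolding \<Delta>_def .
  qed
qed

theorem theorem14:
  fixes P :: "'s::finite \<Rightarrow> 'a::finite \<Rightarrow> 's \<Rightarrow> real"
    and R :: "'s \<Rightarrow> 'a \<Rightarrow> real"
    and \<gamma> :: real and \<tau> :: real
    and \<rho> :: "'s \<Rightarrow> real"
    and h :: "real ^ 'a \<Rightarrow> ereal"
    and \<pi>star :: "'s \<Rightarrow> 'a \<Rightarrow> real"
    and \<pi> :: "nat \<Rightarrow> 's \<Rightarrow> 'a \<Rightarrow> real"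
    and Qhat :: "nat \<Rightarrow> 's \<Rightarrow> 'a \<Rightarrow> real"
    and \<eta> :: "nat \<Rightarrow> real"
  assumes P_stoch: "\<And>s a. P s a \<in> prob_simplex"
    and R_range: "\<And>s a. 0 \<le> R s a \<and> R s a \<le> 1"
    and gamma: "0 < \<gamma>" "\<gamma> < 1"
    and h_leg: "legendre h"
    and h_dom: "vec_of ` prob_simplex \<subseteq> edom h"
    and h_rint: "rel_interior (vec_of ` (prob_simplex :: ('a \<Rightarrow> real) set)) \<subseteq> rel_interior (edom h)"
    and opt: "\<pi>star \<in> policies"
             "\<And>\<pi>' s. \<pi>' \<in> policies \<Longrightarrow> V P R \<gamma> \<pi>star s \<le> V P R \<gamma> \<pi>' s"
    and init: "\<pi> 0 \<in> rint_policies"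
    and update: "\<And>k s. \<pi> (Suc k) s \<in> prob_simplex \<and>
        (\<forall>p\<in>prob_simplex.
           \<eta> k * (\<Sum>a\<in>UNIV. Qhat k s a * \<pi> (Suc k) s a) + bregman h (\<pi> (Suc k) s) (\<pi> k s)
           \<le> \<eta> k * (\<Sum>a\<in>UNIV. Qhat k s a * p a) + bregman h p (\<pi> k s))"
    and err: "\<And>k s a. \<bar>Qhat k s a - Q P R \<gamma> (\<pi> k) s a\<bar> \<le> \<tau>"
    and rho: "\<rho> \<in> prob_simplex"
    and eta_pos: "\<And>k. 0 < \<eta> k"
    and eta0: "\<eta> 0 \<ge> (1 - \<gamma>) / \<gamma> *
                 (\<Sum>s\<in>UNIV. visit_rho P \<gamma> \<rho> \<pi>star s * bregman h (\<pi>star s) (\<pi> 0 s))"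
    and eta_growth: "\<And>k. \<eta> (Suc k) \<ge> \<eta> k / \<gamma>"
  shows "\<forall>k. ereal (V_rho P R \<gamma> \<rho> (\<pi> k) - V_rho_star P R \<gamma> \<rho>)
           \<le> (let \<theta> = ratio_norm (visit_rho P \<gamma> \<rho> \<pi>star) \<rho> / ereal (1 - \<gamma>)
              in (1 - 1 / \<theta>) ^ k * ereal (2 / (1 - \<gamma>))
                 + 4 * \<theta> / ereal (1 - \<gamma>) * ereal \<tau>)"
proof
  fix k
  have opt2: "\<forall>\<pi>'\<in>policies. \<forall>s. V P R \<gamma> \<pi>star s \<le> V P R \<gamma> \<pi>' s" using opt(2) by blast
  note mr = main_real[where P=P and R=R and \<gamma>=\<gamma> and h=h and \<pi>star=\<pi>star and \<pi>=\<pi> and Qhat=Qhat and \<eta>=\<eta> and \<tau>=\<tau> and \<rho>=\<rho>, OF P_stoch R_range gamma h_leg h_dom h_rint opt(1) opt2 init update err rho eta_pos eta0 eta_growth]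
  interpret mdp P R \<gamma> using P_stoch R_range gamma by unfold_locales auto
  let ?Rn = "ratio_norm (visit_rho P \<gamma> \<rho> \<pi>star) \<rho>"
  have ge1: "1 \<le> ?Rn" by (rule ratio_norm_ge1[OF visit_rho_simplex[OF opt(1) rho] rho])
  have g1: "0 < 1 - \<gamma>" using gamma by simp
  have tau0: "0 \<le> \<tau>" by (rule mr(1))
  let ?D = "V_rho P R \<gamma> \<rho> (\<pi> k) - V_rho_star P R \<gamma> \<rho>"
  have Db: "?D \<le> 1 / (1 - \<gamma>)" using mr(2,3) by simp
  show "ereal ?D \<le> (let \<theta> = ?Rn / ereal (1 - \<gamma>)
              in (1 - 1 / \<theta>) ^ k * ereal (2 / (1 - \<gamma>)) + 4 * \<theta> / ereal (1 - \<gamma>) * ereal \<tau>)"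
  proof (cases ?Rn)
    case (real M)
    have M1: "1 \<le> M" using ge1 real by simp
    have main: "?D \<le> (1 - (1 - \<gamma>) / M) ^ k * (2 / (1 - \<gamma>)) + 4 * (M / (1 - \<gamma>)) / (1 - \<gamma>) * \<tau>"
      using mr(4)[OF real] mr(2) by simp
    have eq: "(let \<theta> = ?Rn / ereal (1 - \<gamma>)
              in (1 - 1 / \<theta>) ^ k * ereal (2 / (1 - \<gamma>)) + 4 * \<theta> / ereal (1 - \<gamma>) * ereal \<tau>)
          = ereal ((1 - (1 - \<gamma>) / M) ^ k * (2 / (1 - \<gamma>)) + 4 * (M / (1 - \<gamma>)) / (1 - \<gamma>) * \<tau>)"
    proof -
      define th where "th = M / (1 - \<gamma>)"
      have thp: "0 < th" using g1 M1 unfolding th_def by simp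
      have t: "?Rn / ereal (1 - \<gamma>) = ereal th" using g1 by (simp add: real th_def ereal_divide)
      have a: "(1 - 1 / ereal th) ^ k * ereal (2 / (1 - \<gamma>)) = ereal ((1 - 1 / th) ^ k * (2 / (1 - \<gamma>)))"
        using thp unfolding one_ereal_def ereal_divide by (simp add: ereal_power)
      have b: "4 * ereal th / ereal (1 - \<gamma>) * ereal \<tau> = ereal (4 * th / (1 - \<gamma>) * \<tau>)"
        using g1 by (simp add: ereal_divide)
      have c: "1 / th = (1 - \<gamma>) / M" unfolding th_def by simp
      show ?thesis unfolding Let_def t a b c by (simp add: th_def)
    qed
    show ?thesis unfolding eq using main by simp
  next
    case PInf
    show ?thesis
    proof (cases "\<tau> = 0")
      case True
      have "1 / (1 - \<gamma>) \<le> 2 / (1 - \<gamma>)" using g1 by (intro divide_right_mono) auto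
      hence "ereal ?D \<le> ereal (2 / (1 - \<gamma>))" using Db by simp
      thus ?thesis using g1 by (simp add: PInf True Let_def)
    next
      case False
      thus ?thesis using g1 tau0 by (simp add: PInf Let_def)
    qed
  next
    case MInf
    then show ?thesis using ge1 by simp
  qed
qed

end
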